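(* Let $S$ be a finite nonempty semigroup, and suppose $S$ satisfies an identity $x_{\lambda_1}x_{\lambda_2}\cdots x_{\lambda_\ell}=x_{\lambda'_1}x_{\lambda'_2}\cdots x_{\lambda'_{\ell'}}$ (with $\ell,\ell'\ge 1$ and indices $\lambda_a,\lambda'_b$ drawn from a set of variables $\{x_1,x_2,x_3,\dots\}$) for every substitution of elements of $S$ for the variables. If $\lambda_1\neq\lambda'_1$, then $S$ is $K$-thin. Dually, if $\lambda_\ell\neq\lambda'_{\ell'}$, then $S$ is $K$-thin.
   Context: For a finite nonempty semigroup $S$, the minimal ideal $K(S)$ is the intersection of all nonempty two-sided ideals of $S$. A Rees matrix semigroup $\mathcal{M}(H;I,J;p)$, for sets $I,J$, a group $H$ and a function $p\colon J\times I\to H$, is the set $I\times H\times J$ with product $(i,h,j)(i',h',j')=(i,h\,p(j,i')\,h',j')$. It is known that $K(S)$ is always isomorphic to such a Rees matrix semigroup with $H$ a finite group and $p$ normalized (i.e. $p(j_0,i)=e_H$ and $p(j,i_0)=e_H$ for some fixed $i_0\in I$, $j_0\in J$ and all $i,j$). $S$ is called $K$-thin if $K(S)$ has such a normalized Rees matrix structure with $|I|=1$ or $|J|=1$; equivalently, $K(S)$ is left-simple or right-simple. Examples of such identities are $xy=yx$ (commutativity) and $xya=yxa$ (left-commutativity). *)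

theory Defs
  imports Main
begin

text \<open>A finite nonempty semigroup is modelled as a type of class
  semigroup_mult and finite (HOL types are nonempty).\<close>

fun word_val :: "(nat \<Rightarrow> 'a::semigroup_mult) \<Rightarrow> nat list \<Rightarrow> 'a" where
  "word_val f [] = undefined"
| "word_val f [x] = f x"
| "word_val f (x # y # ys) = f x * word_val f (y # ys)"

definition satisfies_identity :: "'a::semigroup_mult itself \<Rightarrow> nat list \<Rightarrow> nat list \<Rightarrow> bool" where
  "satisfies_identity _ u v \<longleftrightarrow> (\<forall>f :: nat \<Rightarrow> 'a. word_val f u = word_val f v)"

definition two_sided_ideal :: "'a::semigroup_mult set \<Rightarrow> bool" where
  "two_sided_ideal A \<longleftrightarrow> A \<noteq> {} \<and> (\<forall>a\<in>A. \<forall>s. s * a \<in> A \<and> a * s \<in> A)"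

definition minimal_ideal :: "'a::semigroup_mult set" where
  "minimal_ideal = \<Inter> {A. two_sided_ideal A}"

definition left_ideal_of :: "'a::semigroup_mult set \<Rightarrow> 'a set \<Rightarrow> bool" where
  "left_ideal_of T L \<longleftrightarrow> L \<noteq> {} \<and> L \<subseteq> T \<and> (\<forall>t\<in>T. \<forall>a\<in>L. t * a \<in> L)"

definition right_ideal_of :: "'a::semigroup_mult set \<Rightarrow> 'a set \<Rightarrow> bool" where
  "right_ideal_of T R \<longleftrightarrow> R \<noteq> {} \<and> R \<subseteq> T \<and> (\<forall>t\<in>T. \<forall>a\<in>R. a * t \<in> R)"

definition left_simple :: "'a::semigroup_mult set \<Rightarrow> bool" where
  "left_simple T \<longleftrightarrow> (\<forall>L. left_ideal_of T L \<longrightarrow> L = T)"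

definition right_simple :: "'a::semigroup_mult set \<Rightarrow> bool" where
  "right_simple T \<longleftrightarrow> (\<forall>R. right_ideal_of T R \<longrightarrow> R = T)"

definition K_thin :: "'a::semigroup_mult itself \<Rightarrow> bool" where
  "K_thin _ \<longleftrightarrow> left_simple (minimal_ideal :: 'a set) \<or> right_simple (minimal_ideal :: 'a set)"

end

theory Submission
  imports Defs
begin

fun pw :: "'a::semigroup_mult \<Rightarrow> nat \<Rightarrow> 'a" where
  "pw t 0 = t" | "pw t (Suc n) = pw t n * t"

lemma pw_Suc': "pw t (Suc n) = t * pw t n"
  by (induction n) (simp_all add: mult.assoc)

lemma pw_add: "pw t (m + Suc n) = pw t m * pw t n"
  by (induction n) (simp_all add: mult.assoc)

lemma pw_add': "pw t (m + Suc n) = pw t n * pw t m"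
proof -
  have "m + Suc n = n + Suc m" by simp
  then show ?thesis using pw_add[of t n m] by metis
qed

lemma pw_conj: "k = u * k * t \<Longrightarrow> k = pw u n * k * pw t n"
proof (induction n)
  case 0 then show ?case by simp
next
  case (Suc n)
  have "pw u (Suc n) * k * pw t (Suc n) = u * (pw u n * k * pw t n) * t"
    by (simp only: pw_Suc'[of u n] pw.simps(2)[of t n] mult.assoc)
  then show ?case using Suc by simp
qed

lemma pw_rep: "\<exists>i q. pw (t::'a::{semigroup_mult,finite}) i = pw t (i + Suc q)"
proof -
  have "\<not> inj (pw t)"
  proof
    assume "inj (pw t)"
    then have "infinite (range (pw t))"
      using finite_imageD by blast
    then show False by simp
  qed
  then obtain i j where ij: "i \<noteq> j" "pw t i = pw t j" unfolding inj_def by blast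
  show ?thesis
  proof (cases "i < j")
    case True
    then have "j = i + Suc (j - i - 1)" by simp
    then show ?thesis using ij by metis
  next
    case False
    then have "i = j + Suc (i - j - 1)" using ij by simp
    then show ?thesis using ij by metis
  qed
qed

lemma ideal_mult: "two_sided_ideal A \<Longrightarrow> a \<in> A \<Longrightarrow> a * s \<in> A \<and> s * a \<in> A"
  unfolding two_sided_ideal_def by blast

lemma K_sub: "two_sided_ideal A \<Longrightarrow> minimal_ideal \<subseteq> A"
  unfolding minimal_ideal_def by auto

lemma K_ideal: "two_sided_ideal (minimal_ideal :: 'a::{semigroup_mult,finite} set)"
proof -
  have ex: "\<exists>n. \<exists>M::'a set. two_sided_ideal M \<and> card M = n"
    by (rule exI[of _ "card (UNIV::'a set)"], rule exI[of _ UNIV], simp add: two_sided_ideal_def)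
  define n where "n = (LEAST n. \<exists>M::'a set. two_sided_ideal M \<and> card M = n)"
  obtain M :: "'a set" where M: "two_sided_ideal M" "card M = n"
    using LeastI_ex[OF ex] unfolding n_def by blast
  have "M \<subseteq> A" if A: "two_sided_ideal A" for A
  proof -
    obtain m where m: "m \<in> M" using M(1) unfolding two_sided_ideal_def by blast
    obtain a where a: "a \<in> A" using A unfolding two_sided_ideal_def by blast
    have "m * a \<in> M \<inter> A" using m a M(1) A ideal_mult by blast
    then have "two_sided_ideal (M \<inter> A)"
      using M(1) A unfolding two_sided_ideal_def by blast
    then have "n \<le> card (M \<inter> A)" unfolding n_def
      using Least_le[of "\<lambda>n. \<exists>M::'a set. two_sided_ideal M \<and> card M = n" "card (M \<inter> A)"] by blast
    then have "card M \<le> card (M \<inter> A)" using M by simp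
    then have "M \<inter> A = M"
      using card_seteq[OF finite Int_lower1, of M A] by blast
    then show ?thesis by blast
  qed
  then have "M \<subseteq> minimal_ideal" unfolding minimal_ideal_def by blast
  moreover have "minimal_ideal \<subseteq> M" using K_sub M(1) .
  ultimately show ?thesis using M(1) by simp
qed

lemma K_split:
  assumes "x \<in> (minimal_ideal :: 'a::{semigroup_mult,finite} set)" "k \<in> minimal_ideal"
  shows "\<exists>u\<in>minimal_ideal. \<exists>v\<in>minimal_ideal. k = u * x * v"
proof -
  let ?K = "minimal_ideal :: 'a set"
  define A where "A = {u * x * v | u v. u \<in> ?K \<and> v \<in> ?K}"
  have "x * x * x \<in> A" using assms unfolding A_def by blast
  moreover have "s * a \<in> A \<and> a * s \<in> A" if aA: "a \<in> A" for a s
  proof -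
    obtain u v where uv: "a = u * x * v" "u \<in> ?K" "v \<in> ?K" using aA unfolding A_def by blast
    have "s * u \<in> ?K" "v * s \<in> ?K" using uv K_ideal ideal_mult by blast+
    moreover have "s * a = (s * u) * x * v" "a * s = u * x * (v * s)" using uv by (simp_all add: mult.assoc)
    ultimately show ?thesis using uv unfolding A_def by blast
  qed
  ultimately have "two_sided_ideal A" unfolding two_sided_ideal_def by blast
  then have "k \<in> A" using K_sub assms(2) by blast
  then show ?thesis unfolding A_def by blast
qed

lemma right_canc:
  assumes "k \<in> (minimal_ideal :: 'a::{semigroup_mult,finite} set)" "w \<in> minimal_ideal"
  shows "\<exists>z\<in>minimal_ideal. k = k * w * z"
proof -
  have "k * w \<in> minimal_ideal" using assms K_ideal ideal_mult by blast
  then obtain u v where uv: "u \<in> minimal_ideal" "v \<in> minimal_ideal" "k = u * (k * w) * v"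
    using K_split assms(1) by blast
  define t where "t = w * v"
  have k1: "k = u * k * t" using uv(3) unfolding t_def by (metis mult.assoc)
  obtain i q where iq: "pw t i = pw t (i + Suc q)" using pw_rep by blast
  have "k = pw u i * k * pw t i" using pw_conj[OF k1] .
  also have "\<dots> = pw u i * k * (pw t i * pw t q)" using iq pw_add[of t i q] by (metis)
  also have "\<dots> = pw u i * k * pw t i * pw t q" by (simp only: mult.assoc)
  also have "\<dots> = k * pw t q" using pw_conj[OF k1, of i] by metis
  finally have k2: "k = k * pw t q" .
  show ?thesis
  proof (cases q)
    case 0
    then have "k = k * w * v" using k2 unfolding t_def by (metis pw.simps(1) mult.assoc)
    then show ?thesis using uv by blast
  next
    case (Suc q')
    have "v * pw t q' \<in> minimal_ideal" using uv K_ideal ideal_mult by blast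
    moreover have "k = k * w * (v * pw t q')" using k2 Suc pw_Suc'[of t q'] unfolding t_def by (metis mult.assoc)
    ultimately show ?thesis by blast
  qed
qed

lemma left_canc:
  assumes "k \<in> (minimal_ideal :: 'a::{semigroup_mult,finite} set)" "w \<in> minimal_ideal"
  shows "\<exists>z\<in>minimal_ideal. k = z * w * k"
proof -
  have "w * k \<in> minimal_ideal" using assms K_ideal ideal_mult by blast
  then obtain u v where uv: "u \<in> minimal_ideal" "v \<in> minimal_ideal" "k = u * (w * k) * v"
    using K_split assms(1) by blast
  define t where "t = u * w"
  have k1: "k = t * k * v" using uv(3) unfolding t_def by (metis mult.assoc)
  obtain i q where iq: "pw t i = pw t (i + Suc q)" using pw_rep by blast
  have "k = pw t i * k * pw v i" using pw_conj[OF k1] .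
  also have "\<dots> = (pw t q * pw t i) * k * pw v i" using iq pw_add'[of t i q] by (metis)
  also have "\<dots> = pw t q * (pw t i * k * pw v i)" by (simp only: mult.assoc)
  also have "\<dots> = pw t q * k" using pw_conj[OF k1, of i] by metis
  finally have k2: "k = pw t q * k" .
  show ?thesis
  proof (cases q)
    case 0
    then have "k = u * w * k" using k2 unfolding t_def by (metis pw.simps(1))
    then show ?thesis using uv by blast
  next
    case (Suc q')
    have "pw t q' * u \<in> minimal_ideal" using uv K_ideal ideal_mult by blast
    moreover have "k = (pw t q' * u) * w * k" using k2 Suc pw.simps(2)[of t q'] unfolding t_def by (metis mult.assoc)
    ultimately show ?thesis by blast
  qed
qed

lemma wv_cons: "xs \<noteq> [] \<Longrightarrow> word_val f (x # xs) = f x * word_val f xs"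
  by (cases xs) auto

lemma wv_snoc: "xs \<noteq> [] \<Longrightarrow> word_val f (xs @ [x]) = word_val f xs * f x"
proof (induction xs)
  case Nil then show ?case by simp
next
  case (Cons y ys)
  show ?case
  proof (cases "ys = []")
    case True then show ?thesis by simp
  next
    case False
    then show ?thesis using Cons by (simp add: wv_cons mult.assoc)
  qed
qed

lemma wv_in: "xs \<noteq> [] \<Longrightarrow> (\<And>x. f x \<in> A) \<Longrightarrow> two_sided_ideal A \<Longrightarrow> word_val f xs \<in> A"
proof (induction xs)
  case Nil then show ?case by simp
next
  case (Cons y ys)
  then show ?case by (cases "ys = []") (auto simp: wv_cons ideal_mult)
qed

theorem theorem7p9:
  fixes lam lam' :: "nat list"
  assumes "lam \<noteq> []" and "lam' \<noteq> []"
    and "satisfies_identity TYPE('a::{semigroup_mult, finite}) lam lam'"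
  shows "(hd lam \<noteq> hd lam' \<longrightarrow> K_thin TYPE('a)) \<and>
         (last lam \<noteq> last lam' \<longrightarrow> K_thin TYPE('a))"
proof -
  let ?K = "minimal_ideal :: 'a set"
  have id: "\<And>f :: nat \<Rightarrow> 'a. word_val f lam = word_val f lam'"
    using assms(3) unfolding satisfies_identity_def by blast
  have Kid: "two_sided_ideal ?K" by (rule K_ideal)
  have part1: "K_thin TYPE('a)" if hne: "hd lam \<noteq> hd lam'"
  proof -
    have "right_simple ?K"
      unfolding right_simple_def right_ideal_of_def
    proof (intro allI impI)
      fix R assume R: "R \<noteq> {} \<and> R \<subseteq> ?K \<and> (\<forall>t\<in>?K. \<forall>a\<in>R. a * t \<in> R)"
      obtain r where r: "r \<in> R" using R by blast
      have rK: "r \<in> ?K" using R r by blast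
      have "k \<in> R" if kK: "k \<in> ?K" for k
      proof -
        define f where "f = (\<lambda>x. if x = hd lam' then r else k)"
        have fK: "\<And>x. f x \<in> ?K" using rK kK by (simp add: f_def)
        have l1: "lam = hd lam # tl lam" "lam' = hd lam' # tl lam'" using assms(1,2) by simp_all
        have "word_val f lam' \<in> R"
        proof (cases "tl lam' = []")
          case True then show ?thesis using l1(2) r by (metis f_def word_val.simps(2))
        next
          case False
          then have "word_val f lam' = r * word_val f (tl lam')"
            using l1(2) wv_cons by (metis f_def)
          moreover have "word_val f (tl lam') \<in> ?K" using wv_in[OF False fK Kid] .
          ultimately show ?thesis using R r by simp
        qed
        then have inR: "word_val f lam \<in> R" using id by simp
        show ?thesis
        proof (cases "tl lam = []")
          case True then show ?thesis using l1(1) inR hne by (metis f_def word_val.simps(2))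
        next
          case False
          then have "word_val f lam = k * word_val f (tl lam)"
            using l1(1) wv_cons hne by (metis f_def)
          moreover have W: "word_val f (tl lam) \<in> ?K" using wv_in[OF False fK Kid] .
          obtain z where "z \<in> ?K" "k = k * word_val f (tl lam) * z" using right_canc[OF kK W] by blast
          ultimately show ?thesis using R inR by metis
        qed
      qed
      then show "R = ?K" using R by blast
    qed
    then show ?thesis unfolding K_thin_def by blast
  qed
  have part2: "K_thin TYPE('a)" if hne: "last lam \<noteq> last lam'"
  proof -
    have "left_simple ?K"
      unfolding left_simple_def left_ideal_of_def
    proof (intro allI impI)
      fix R assume R: "R \<noteq> {} \<and> R \<subseteq> ?K \<and> (\<forall>t\<in>?K. \<forall>a\<in>R. t * a \<in> R)"
      obtain r where r: "r \<in> R" using R by blast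
      have rK: "r \<in> ?K" using R r by blast
      have "k \<in> R" if kK: "k \<in> ?K" for k
      proof -
        define f where "f = (\<lambda>x. if x = last lam' then r else k)"
        have fK: "\<And>x. f x \<in> ?K" using rK kK by (simp add: f_def)
        have l1: "lam = butlast lam @ [last lam]" "lam' = butlast lam' @ [last lam']"
          using assms(1,2) by simp_all
        have "word_val f lam' \<in> R"
        proof (cases "butlast lam' = []")
          case True then show ?thesis using l1(2) r by (metis f_def word_val.simps(2) append_Nil)
        next
          case False
          then have "word_val f lam' = word_val f (butlast lam') * r"
            using l1(2) wv_snoc by (metis f_def)
          moreover have "word_val f (butlast lam') \<in> ?K" using wv_in[OF False fK Kid] .
          ultimately show ?thesis using R r by simp
        qed
        then have inR: "word_val f lam \<in> R" using id by simp
        show ?thesis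
        proof (cases "butlast lam = []")
          case True then show ?thesis using l1(1) inR hne by (metis f_def word_val.simps(2) append_Nil)
        next
          case False
          then have "word_val f lam = word_val f (butlast lam) * k"
            using l1(1) wv_snoc hne by (metis f_def)
          moreover have W: "word_val f (butlast lam) \<in> ?K" using wv_in[OF False fK Kid] .
          obtain z where "z \<in> ?K" "k = z * word_val f (butlast lam) * k" using left_canc[OF kK W] by blast
          ultimately show ?thesis using R inR by (metis mult.assoc)
        qed
      qed
      then show "R = ?K" using R by blast
    qed
    then show ?thesis unfolding K_thin_def by blast
  qed
  show ?thesis using part1 part2 by blast
qed

end
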